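(* In $(\lambda^2\beta\eta\pi* )'$: (1) for every type $\psi$, the set $\mathcal{SN}^\psi$ of SN terms of type $\psi$ is an RC of type $\psi$; (2) if $\mathcal{R}_i$ is an RC of type $\varphi_i$ for $i=1,2$, then $\mathcal{R}_1\times\mathcal{R}_2$ is an RC of type $\varphi_1\times\varphi_2$ and $\mathcal{R}_1\to\mathcal{R}_2$ is an RC of type $\varphi_1\to\varphi_2$.
   Context: System $(\lambda^2\beta\eta\pi* )'$. Types are generated from type variables $X,Y,\ldots$ and a type constant $\top$ by $\varphi\times\psi$, $\varphi\to\psi$ and $\forall X.\varphi$. Terms are Church-style typed: the constant $*^\top$, variables $x^\varphi$, $\lambda x^\varphi.t$, application $uv$, pairs $\langle u,v\rangle$, projections $\pi_1t,\pi_2t$, universal abstraction $(\Lambda X.v^\varphi)^{\forall X.\varphi}$ (allowed only when $X$ is not free in the type of any free variable of $v$), and universal application $(t^{\forall X.\varphi}\psi)^{\varphi[X:=\psi]}$. Terms are identified up to renaming of bound variables ($\equiv$); $\mathrm{FV}$, $\mathrm{FTV}$ denote free term / type variables. $\mathit{Iso}(\top)$ is the least set of types with $\top\in\mathit{Iso}(\top)$, $\varphi\to\tau$, $\forall X.\tau\in\mathit{Iso}(\top)$ if $\tau\in\mathit{Iso}(\top)$, $\tau_1\times\tau_2\in\mathit{Iso}(\top)$ if $\tau_1,\tau_2\in\mathit{Iso}(\top)$. For $\tau\in\mathit{Iso}(\top)$: $*^\top$ is the constant, $*^{\varphi\to\tau}:=\lambda x^\varphi.*^\tau$, $*^{\tau_1\times\tau_2}:=\langle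 *^{\tau_1},*^{\tau_2}\rangle$, $*^{\forall X.\tau}:=\Lambda X.*^\tau$. The one-step relation $\to$ is the closure under all contexts of: $(\beta)$ $(\lambda x.u)v\to u[x:=v]$; $\pi_1\langle u,v\rangle\to u$, $\pi_2\langle u,v\rangle\to v$; $(\eta)$ $\lambda x.tx\to t$ ($x\notin\mathrm{FV}(t)$); $(SP)$ $\langle\pi_1u,\pi_2u\rangle\to u$; (gentop) $u^\tau\to *^\tau$ ($\tau\in\mathit{Iso}(\top)$, $u\not\equiv *^\tau$); $(\eta_{top})$ $\lambda x^\tau.t\,*^\tau\to t$ ($x\notin\mathrm{FV}(t)$, $\tau\in\mathit{Iso}(\top)$); $\langle\pi_1u,*^\tau\rangle\to u$ ($u:\varphi\times\tau$, $\tau\in\mathit{Iso}(\top)$); $\langle *^\tau,\pi_2u\rangle\to u$ ($u:\tau\times\psi$, $\tau\in\mathit{Iso}(\top)$); $(\beta^2)$ $(\Lambda X.t)\varphi\to t[X:=\varphi]$; $(\eta^2)$ $\Lambda X.sX\to s$ ($X\notin\mathrm{FTV}(s)$). A term is SN if no infinite $\to$-sequence starts from it; $\mathcal{SN}^\psi$ is the set of SN terms of type $\psi$. A term is neutral if it is not of the form $\langle u,v\rangle$, $\lambda x.v$ or $\Lambda X.u$. For a term $t$ and a variable $z^\top$, $t[*^\top:=z^\top]$ replaces every occurrence of the constant $*^\top$ in $t$ by $z^\top$; a set $A$ of terms is variant-closed if $t[*^\top:=z^\top]\in A$ for every $t\in A$ and every variable $z^\top$ not occurring in $t$. A reducibility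 candidate (RC) of type $\varphi$ is a set $\mathcal{R}$ of terms of type $\varphi$ such that: (CR0) if $\varphi\in\mathit{Iso}(\top)$ then $*^\varphi\in\mathcal{R}$, and $\mathcal{R}$ is variant-closed; (CR1) every $t\in\mathcal{R}$ is SN; (CR2) $t\in\mathcal{R}$, $t\to t'$ imply $t'\in\mathcal{R}$; (CR3) if $t$ of type $\varphi$ is neutral and every one-step reduct of $t$ is in $\mathcal{R}$, then $t\in\mathcal{R}$. For RCs $\mathcal{R}_i$ of type $\varphi_i$: $\mathcal{R}_1\times\mathcal{R}_2=\{t^{\varphi_1\times\varphi_2}\mid \pi_it\in\mathcal{R}_i, i=1,2\}$ and $\mathcal{R}_1\to\mathcal{R}_2=\{t^{\varphi_1\to\varphi_2}\mid \forall u\in\mathcal{R}_1,\ tu\in\mathcal{R}_2\}$. *)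

theory Defs
  imports Main
begin

text \<open>Representation: type variables bound by
  a universal quantifier are de Bruijn indices (TBnd), free type variables are named
  (TFree).  Term variables bound by lambda are de Bruijn indices (BVar); free term
  variables are named and Church-style annotated with their type (FVar x T), so
  x^A and x^B are different variables.  Universal abstraction TLam binds type
  index 0 in the annotations of its body.  Terms are thereby identified up to
  renaming of bound (term and type) variables, and the side condition on
  universal abstraction is built into the representation.\<close>

datatype ty = TFree nat | TBnd nat | Top | Prod ty ty | Arr ty ty | All ty

fun wfty :: "nat \<Rightarrow> ty \<Rightarrow> bool" where
  "wfty n (TFree X) = True"
| "wfty n (TBnd i) = (i < n)"
| "wfty n Top = True"
| "wfty n (Prod A B) = (wfty n A \<and> wfty n B)"
| "wfty n (Arr A B) = (wfty n A \<and> wfty n B)"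
| "wfty n (All A) = wfty (Suc n) A"

definition is_type :: "ty \<Rightarrow> bool" where
  "is_type T \<longleftrightarrow> wfty 0 T"

fun tshift :: "nat \<Rightarrow> ty \<Rightarrow> ty" where
  "tshift k (TFree X) = TFree X"
| "tshift k (TBnd i) = (if i < k then TBnd i else TBnd (Suc i))"
| "tshift k Top = Top"
| "tshift k (Prod A B) = Prod (tshift k A) (tshift k B)"
| "tshift k (Arr A B) = Arr (tshift k A) (tshift k B)"
| "tshift k (All A) = All (tshift (Suc k) A)"

fun tsubst :: "nat \<Rightarrow> ty \<Rightarrow> ty \<Rightarrow> ty" where
  "tsubst k A (TFree X) = TFree X"
| "tsubst k A (TBnd i) = (if i < k then TBnd i else if i = k then A else TBnd (i - 1))"
| "tsubst k A Top = Top"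
| "tsubst k A (Prod B C) = Prod (tsubst k A B) (tsubst k A C)"
| "tsubst k A (Arr B C) = Arr (tsubst k A B) (tsubst k A C)"
| "tsubst k A (All B) = All (tsubst (Suc k) (tshift 0 A) B)"

datatype trm =
    Star
  | FVar nat ty
  | BVar nat
  | Lam ty trm
  | App trm trm
  | Pair trm trm
  | Pi1 trm
  | Pi2 trm
  | TLam trm
  | TApp trm ty

text \<open>Shifting / substituting type indices inside terms (free variables carry
  closed annotations and are left untouched).\<close>
fun ttshift :: "nat \<Rightarrow> trm \<Rightarrow> trm" where
  "ttshift k Star = Star"
| "ttshift k (FVar x T) = FVar x T"
| "ttshift k (BVar i) = BVar i"
| "ttshift k (Lam A b) = Lam (tshift k A) (ttshift k b)"
| "ttshift k (App u v) = App (ttshift k u) (ttshift k v)"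
| "ttshift k (Pair u v) = Pair (ttshift k u) (ttshift k v)"
| "ttshift k (Pi1 u) = Pi1 (ttshift k u)"
| "ttshift k (Pi2 u) = Pi2 (ttshift k u)"
| "ttshift k (TLam b) = TLam (ttshift (Suc k) b)"
| "ttshift k (TApp u A) = TApp (ttshift k u) (tshift k A)"

fun ttsubst :: "nat \<Rightarrow> ty \<Rightarrow> trm \<Rightarrow> trm" where
  "ttsubst k A Star = Star"
| "ttsubst k A (FVar x T) = FVar x T"
| "ttsubst k A (BVar i) = BVar i"
| "ttsubst k A (Lam B b) = Lam (tsubst k A B) (ttsubst k A b)"
| "ttsubst k A (App u v) = App (ttsubst k A u) (ttsubst k A v)"
| "ttsubst k A (Pair u v) = Pair (ttsubst k A u) (ttsubst k A v)"
| "ttsubst k A (Pi1 u) = Pi1 (ttsubst k A u)"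
| "ttsubst k A (Pi2 u) = Pi2 (ttsubst k A u)"
| "ttsubst k A (TLam b) = TLam (ttsubst (Suc k) (tshift 0 A) b)"
| "ttsubst k A (TApp u B) = TApp (ttsubst k A u) (tsubst k A B)"

fun lift :: "nat \<Rightarrow> trm \<Rightarrow> trm" where
  "lift k Star = Star"
| "lift k (FVar x T) = FVar x T"
| "lift k (BVar i) = (if i < k then BVar i else BVar (Suc i))"
| "lift k (Lam A b) = Lam A (lift (Suc k) b)"
| "lift k (App u v) = App (lift k u) (lift k v)"
| "lift k (Pair u v) = Pair (lift k u) (lift k v)"
| "lift k (Pi1 u) = Pi1 (lift k u)"
| "lift k (Pi2 u) = Pi2 (lift k u)"
| "lift k (TLam b) = TLam (lift k b)"
| "lift k (TApp u A) = TApp (lift k u) A"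

fun subst :: "nat \<Rightarrow> trm \<Rightarrow> trm \<Rightarrow> trm" where
  "subst k s Star = Star"
| "subst k s (FVar x T) = FVar x T"
| "subst k s (BVar i) = (if i < k then BVar i else if i = k then s else BVar (i - 1))"
| "subst k s (Lam A b) = Lam A (subst (Suc k) (lift 0 s) b)"
| "subst k s (App u v) = App (subst k s u) (subst k s v)"
| "subst k s (Pair u v) = Pair (subst k s u) (subst k s v)"
| "subst k s (Pi1 u) = Pi1 (subst k s u)"
| "subst k s (Pi2 u) = Pi2 (subst k s u)"
| "subst k s (TLam b) = TLam (subst k (ttshift 0 s) b)"
| "subst k s (TApp u A) = TApp (subst k s u) A"

text \<open>Church-style typing: n = number of enclosing universal abstractions,
  G = types of the enclosing lambda-bound variables.\<close>
inductive typing :: "nat \<Rightarrow> ty list \<Rightarrow> trm \<Rightarrow> ty \<Rightarrow> bool" where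
  T_Star: "typing n G Star Top"
| T_FVar: "wfty 0 T \<Longrightarrow> typing n G (FVar x T) T"
| T_BVar: "i < length G \<Longrightarrow> typing n G (BVar i) (G ! i)"
| T_Lam: "wfty n A \<Longrightarrow> typing n (A # G) b B \<Longrightarrow> typing n G (Lam A b) (Arr A B)"
| T_App: "typing n G u (Arr A B) \<Longrightarrow> typing n G v A \<Longrightarrow> typing n G (App u v) B"
| T_Pair: "typing n G u A \<Longrightarrow> typing n G v B \<Longrightarrow> typing n G (Pair u v) (Prod A B)"
| T_Pi1: "typing n G u (Prod A B) \<Longrightarrow> typing n G (Pi1 u) A"
| T_Pi2: "typing n G u (Prod A B) \<Longrightarrow> typing n G (Pi2 u) B"
| T_TLam: "typing (Suc n) (map (tshift 0) G) b B \<Longrightarrow> typing n G (TLam b) (All B)"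
| T_TApp: "typing n G u (All B) \<Longrightarrow> wfty n A \<Longrightarrow> typing n G (TApp u A) (tsubst 0 A B)"

text \<open>A (closed-context) term of type T: free variables are the named FVars.\<close>
definition has_type :: "trm \<Rightarrow> ty \<Rightarrow> bool" where
  "has_type t T \<longleftrightarrow> typing 0 [] t T"

inductive iso :: "ty \<Rightarrow> bool" where
  iso_Top: "iso Top"
| iso_Arr: "iso T \<Longrightarrow> iso (Arr A T)"
| iso_All: "iso T \<Longrightarrow> iso (All T)"
| iso_Prod: "iso A \<Longrightarrow> iso B \<Longrightarrow> iso (Prod A B)"

text \<open>The canonical inhabitant *^T (only meaningful for iso T).\<close>
fun star :: "ty \<Rightarrow> trm" where
  "star Top = Star"
| "star (Arr A T) = Lam A (star T)"
| "star (Prod A B) = Pair (star A) (star B)"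
| "star (All T) = TLam (star T)"
| "star (TFree X) = Star"
| "star (TBnd i) = Star"

inductive red :: "nat \<Rightarrow> ty list \<Rightarrow> trm \<Rightarrow> trm \<Rightarrow> bool" where
  r_beta: "red n G (App (Lam A u) v) (subst 0 v u)"
| r_proj1: "red n G (Pi1 (Pair u v)) u"
| r_proj2: "red n G (Pi2 (Pair u v)) v"
| r_eta: "red n G (Lam A (App (lift 0 t) (BVar 0))) t"
| r_SP: "red n G (Pair (Pi1 u) (Pi2 u)) u"
| r_gentop: "typing n G u T \<Longrightarrow> iso T \<Longrightarrow> u \<noteq> star T \<Longrightarrow> red n G u (star T)"
| r_eta_top: "iso A \<Longrightarrow> red n G (Lam A (App (lift 0 t) (star A))) t"
| r_pair_top1: "typing n G u (Prod A T) \<Longrightarrow> iso T \<Longrightarrow> red n G (Pair (Pi1 u) (star T)) u"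
| r_pair_top2: "typing n G u (Prod T B) \<Longrightarrow> iso T \<Longrightarrow> red n G (Pair (star T) (Pi2 u)) u"
| r_beta2: "red n G (TApp (TLam t) A) (ttsubst 0 A t)"
| r_eta2: "red n G (TLam (TApp (ttshift 0 s) (TBnd 0))) s"
| c_Lam: "red n (A # G) b b' \<Longrightarrow> red n G (Lam A b) (Lam A b')"
| c_AppL: "red n G u u' \<Longrightarrow> red n G (App u v) (App u' v)"
| c_AppR: "red n G v v' \<Longrightarrow> red n G (App u v) (App u v')"
| c_PairL: "red n G u u' \<Longrightarrow> red n G (Pair u v) (Pair u' v)"
| c_PairR: "red n G v v' \<Longrightarrow> red n G (Pair u v) (Pair u v')"
| c_Pi1: "red n G u u' \<Longrightarrow> red n G (Pi1 u) (Pi1 u')"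
| c_Pi2: "red n G u u' \<Longrightarrow> red n G (Pi2 u) (Pi2 u')"
| c_TLam: "red (Suc n) (map (tshift 0) G) b b' \<Longrightarrow> red n G (TLam b) (TLam b')"
| c_TApp: "red n G u u' \<Longrightarrow> red n G (TApp u A) (TApp u' A)"

definition step :: "trm \<Rightarrow> trm \<Rightarrow> bool" where
  "step t t' \<longleftrightarrow> red 0 [] t t'"

definition SN :: "trm \<Rightarrow> bool" where
  "SN t \<longleftrightarrow> \<not> (\<exists>f. f 0 = t \<and> (\<forall>i. step (f i) (f (Suc i))))"

definition SNset :: "ty \<Rightarrow> trm set" where
  "SNset T = {t. has_type t T \<and> SN t}"

definition neutral :: "trm \<Rightarrow> bool" where
  "neutral t \<longleftrightarrow> (\<forall>u v. t \<noteq> Pair u v) \<and> (\<forall>A b. t \<noteq> Lam A b) \<and> (\<forall>b. t \<noteq> TLam b)"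

fun fvs :: "trm \<Rightarrow> (nat \<times> ty) set" where
  "fvs Star = {}"
| "fvs (FVar x T) = {(x, T)}"
| "fvs (BVar i) = {}"
| "fvs (Lam A b) = fvs b"
| "fvs (App u v) = fvs u \<union> fvs v"
| "fvs (Pair u v) = fvs u \<union> fvs v"
| "fvs (Pi1 u) = fvs u"
| "fvs (Pi2 u) = fvs u"
| "fvs (TLam b) = fvs b"
| "fvs (TApp u A) = fvs u"

fun repl_star :: "nat \<Rightarrow> trm \<Rightarrow> trm" where
  "repl_star z Star = FVar z Top"
| "repl_star z (FVar x T) = FVar x T"
| "repl_star z (BVar i) = BVar i"
| "repl_star z (Lam A b) = Lam A (repl_star z b)"
| "repl_star z (App u v) = App (repl_star z u) (repl_star z v)"
| "repl_star z (Pair u v) = Pair (repl_star z u) (repl_star z v)"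
| "repl_star z (Pi1 u) = Pi1 (repl_star z u)"
| "repl_star z (Pi2 u) = Pi2 (repl_star z u)"
| "repl_star z (TLam b) = TLam (repl_star z b)"
| "repl_star z (TApp u A) = TApp (repl_star z u) A"

definition variant_closed :: "trm set \<Rightarrow> bool" where
  "variant_closed R \<longleftrightarrow> (\<forall>t \<in> R. \<forall>z. (z, Top) \<notin> fvs t \<longrightarrow> repl_star z t \<in> R)"

definition RC :: "ty \<Rightarrow> trm set \<Rightarrow> bool" where
  "RC T R \<longleftrightarrow>
     (\<forall>t \<in> R. has_type t T) \<and>
     ((iso T \<longrightarrow> star T \<in> R) \<and> variant_closed R) \<and>
     (\<forall>t \<in> R. SN t) \<and>
     (\<forall>t t'. t \<in> R \<longrightarrow> step t t' \<longrightarrow> t' \<in> R) \<and>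
     (\<forall>t. has_type t T \<longrightarrow> neutral t \<longrightarrow> (\<forall>t'. step t t' \<longrightarrow> t' \<in> R) \<longrightarrow> t \<in> R)"

definition RC_prod :: "ty \<Rightarrow> ty \<Rightarrow> trm set \<Rightarrow> trm set \<Rightarrow> trm set" where
  "RC_prod A B R1 R2 = {t. has_type t (Prod A B) \<and> Pi1 t \<in> R1 \<and> Pi2 t \<in> R2}"

definition RC_arr :: "ty \<Rightarrow> ty \<Rightarrow> trm set \<Rightarrow> trm set \<Rightarrow> trm set" where
  "RC_arr A B R1 R2 = {t. has_type t (Arr A B) \<and> (\<forall>u \<in> R1. App t u \<in> R2)}"

end

theory Submission
  imports Defs
begin



lemma wfty_mono: "wfty n T \<Longrightarrow> n \<le> m \<Longrightarrow> wfty m T"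
  by (induction T arbitrary: n m) auto

lemma tshift_closed: "wfty n T \<Longrightarrow> n \<le> k \<Longrightarrow> tshift k T = T"
  by (induction T arbitrary: n k) auto

lemma tsubst_closed: "wfty n T \<Longrightarrow> n \<le> k \<Longrightarrow> tsubst k A T = T"
  by (induction T arbitrary: n k A) auto

lemma wfty_tshift: "wfty n T \<Longrightarrow> wfty (Suc n) (tshift k T)"
  by (induction T arbitrary: n k) auto

lemma wfty_tshift_inv: "wfty (Suc n) (tshift k T) \<Longrightarrow> k \<le> n \<Longrightarrow> wfty n T"
  by (induction T arbitrary: n k) (auto split: if_splits)

lemma wfty_tsubst: "wfty (Suc n) B \<Longrightarrow> k \<le> n \<Longrightarrow> wfty n A \<Longrightarrow> wfty n (tsubst k A B)"
proof (induction B arbitrary: n k A)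
  case (All B)
  then show ?case using All.IH[of "Suc n" "Suc k" "tshift 0 A"] wfty_tshift[of n A 0] by simp
qed auto

lemma tshift_inj: "tshift k A = tshift k B \<Longrightarrow> A = B"
  by (induction A arbitrary: k B; case_tac B; auto split: if_splits)

lemma tshift_tshift: "j \<le> m \<Longrightarrow> tshift (Suc m) (tshift j A) = tshift j (tshift m A)"
  by (induction A arbitrary: j m) auto

lemma tsubst_tshift_same: "tsubst k A (tshift k C) = C"
  by (induction C arbitrary: k A) auto

lemma tsubst_TBnd_tshift: "tsubst k (TBnd k) (tshift (Suc k) D) = D"
  by (induction D arbitrary: k) auto

lemma tshift_tsubst: "tshift (j+k) (tsubst j A B) = tsubst j (tshift (j+k) A) (tshift (Suc (j+k)) B)"
proof (induction B arbitrary: j A)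
  case (All B)
  then show ?case using tshift_tshift[of 0 "j+k" A] by (simp add: add_Suc[symmetric] del: add_Suc)
qed auto

lemma tsubst_tshift_comm: "j \<le> k \<Longrightarrow> tsubst (Suc k) (tshift j A) (tshift j C) = tshift j (tsubst k A C)"
proof (induction C arbitrary: j k A)
  case (All C)
  then show ?case using All.IH[of "Suc j" "Suc k" "tshift 0 A"] tshift_tshift[of 0 j A] by simp
qed auto

lemma tsubst_tsubst: "tsubst (j + k) A (tsubst j C D) = tsubst j (tsubst (j+k) A C) (tsubst (Suc (j+k)) (tshift j A) D)"
proof (induction D arbitrary: j A C)
  case (TBnd i)
  then show ?case by (auto simp: tsubst_tshift_same)
next
  case (All D)
  then show ?case using tshift_tshift[of 0 j A] tsubst_tshift_comm[of 0 "j+k" A C]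
    by (simp add: add_Suc[symmetric] del: add_Suc)
qed auto




inductive_cases tyStar: "typing n G Star T"
inductive_cases tyFVar: "typing n G (FVar x S) T"
inductive_cases tyBVar: "typing n G (BVar i) T"
inductive_cases tyLam: "typing n G (Lam A b) T"
inductive_cases tyApp: "typing n G (App u v) T"
inductive_cases tyPair: "typing n G (Pair u v) T"
inductive_cases tyPi1: "typing n G (Pi1 u) T"
inductive_cases tyPi2: "typing n G (Pi2 u) T"
inductive_cases tyTLam: "typing n G (TLam b) T"
inductive_cases tyTApp: "typing n G (TApp u A) T"

lemma typing_unique: "typing n G t T \<Longrightarrow> typing n G t T' \<Longrightarrow> T = T'"
proof (induction arbitrary: T' rule: typing.induct)
  case (T_Star n G) from T_Star.prems show ?case by (cases rule: tyStar) auto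
next
  case (T_FVar T n G x) from T_FVar.prems show ?case by (auto elim: tyFVar)
next
  case (T_BVar i G n) from T_BVar.prems show ?case by (cases rule: tyBVar) auto
next
  case (T_Lam n A G b B) from T_Lam.prems show ?case by (cases rule: tyLam) (auto dest: T_Lam.IH)
next
  case (T_App n G u A B v) from T_App.prems show ?case by (cases rule: tyApp) (auto dest: T_App.IH)
next
  case (T_Pair n G u A v B) from T_Pair.prems show ?case by (cases rule: tyPair) (auto dest: T_Pair.IH)
next
  case (T_Pi1 n G u A B) from T_Pi1.prems show ?case by (cases rule: tyPi1) (auto dest: T_Pi1.IH)
next
  case (T_Pi2 n G u A B) from T_Pi2.prems show ?case by (cases rule: tyPi2) (auto dest: T_Pi2.IH)
next
  case (T_TLam n G b B) from T_TLam.prems show ?case by (cases rule: tyTLam) (auto dest: T_TLam.IH)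
next
  case (T_TApp n G u B A) from T_TApp.prems show ?case by (cases rule: tyTApp) (auto dest: T_TApp.IH)
qed

lemma typing_wfty: "typing n G t T \<Longrightarrow> (\<forall>C\<in>set G. wfty n C) \<Longrightarrow> wfty n T"
proof (induction rule: typing.induct)
  case (T_FVar T n G x) then show ?case using wfty_mono by blast
next
  case (T_TLam n G b B) then show ?case using wfty_tshift by auto
next
  case (T_TApp n G u B A) then show ?case using wfty_tsubst by auto
qed auto

lemma typing_lift: "typing n G s A \<Longrightarrow> k \<le> length G \<Longrightarrow> typing n (take k G @ C # drop k G) (lift k s) A"
proof (induction arbitrary: k C rule: typing.induct)
  case (T_BVar i G n)
  show ?case
  proof (cases "i < k")
    case True
    then have "G ! i = (take k G @ C # drop k G) ! i" using T_BVar by (simp add: nth_append)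
    then show ?thesis using True T_BVar by (simp add: typing.T_BVar)
  next
    case False
    then have "G ! i = (take k G @ C # drop k G) ! Suc i" using T_BVar by (simp add: nth_append Suc_diff_le min_def)
    moreover have "Suc i < length (take k G @ C # drop k G)" using T_BVar by simp
    ultimately show ?thesis using False by (simp add: typing.T_BVar)
  qed
next
  case (T_Lam n A G b B)
  then show ?case using T_Lam.IH[of "Suc k" C] by (auto intro: typing.T_Lam)
next
  case (T_TLam n G b B)
  then show ?case using T_TLam.IH[of k "tshift 0 C"]
    by (auto intro: typing.T_TLam simp: take_map drop_map)
qed (fastforce intro: typing.intros)+




lemma typing_ttshift: "typing n G s A \<Longrightarrow> k \<le> n \<Longrightarrow> typing (Suc n) (map (tshift k) G) (ttshift k s) (tshift k A)"
proof (induction arbitrary: k rule: typing.induct)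
  case (T_FVar T n G x)
  then show ?case using tshift_closed[of 0 T k] by (auto intro: typing.T_FVar)
next
  case (T_BVar i G n)
  then show ?case using typing.T_BVar[of i "map (tshift k) G" "Suc n"] by simp
next
  case (T_Lam n A G b B)
  then show ?case by (auto intro!: typing.T_Lam wfty_tshift)
next
  case (T_TLam n G b B)
  have eq: "map (tshift 0) (map (tshift k) G) = map (tshift (Suc k)) (map (tshift 0) G)"
    by (induction G) (simp_all add: tshift_tshift)
  have "typing (Suc (Suc n)) (map (tshift (Suc k)) (map (tshift 0) G)) (ttshift (Suc k) b) (tshift (Suc k) B)"
    using T_TLam.IH[of "Suc k"] T_TLam.prems by simp
  then have "typing (Suc (Suc n)) (map (tshift 0) (map (tshift k) G)) (ttshift (Suc k) b) (tshift (Suc k) B)"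
    unfolding eq .
  from typing.T_TLam[OF this] show ?case by simp
next
  case (T_TApp n G u B A)
  have "tshift k (tsubst 0 A B) = tsubst 0 (tshift k A) (tshift (Suc k) B)"
    using tshift_tsubst[of 0 k A B] by simp
  then show ?case using T_TApp by (auto intro!: typing.T_TApp wfty_tshift)
qed (fastforce intro: typing.intros)+

lemma nth_take_drop_Suc: "k < length G \<Longrightarrow> i > k \<Longrightarrow> i < length G \<Longrightarrow> (take k G @ drop (Suc k) G) ! (i - 1) = G ! i"
  by (cases i) (auto simp: nth_append min_def)

lemma typing_subst: "typing n G b B \<Longrightarrow> k < length G \<Longrightarrow> typing n (take k G @ drop (Suc k) G) s (G ! k) \<Longrightarrow>
   typing n (take k G @ drop (Suc k) G) (subst k s b) B"
proof (induction arbitrary: k s rule: typing.induct)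
  case (T_BVar i G n)
  show ?case
  proof (cases "i < k")
    case True
    then show ?thesis using T_BVar typing.T_BVar[of i "take k G @ drop (Suc k) G" n] by (simp add: nth_append)
  next
    case False
    show ?thesis
    proof (cases "i = k")
      case True then show ?thesis using T_BVar by simp
    next
      case False
      then have "i > k" using \<open>\<not> i < k\<close> by simp
      then show ?thesis using T_BVar nth_take_drop_Suc[of k G i]
          typing.T_BVar[of "i - 1" "take k G @ drop (Suc k) G" n] by auto
    qed
  qed
next
  case (T_Lam n A G b B)
  have "typing n (take 0 (take k G @ drop (Suc k) G) @ A # drop 0 (take k G @ drop (Suc k) G)) (lift 0 s) (G ! k)"
    by (rule typing_lift) (use T_Lam in auto)
  then have "typing n (take (Suc k) (A # G) @ drop (Suc (Suc k)) (A # G)) (lift 0 s) ((A # G) ! Suc k)" by simp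
  then show ?case using T_Lam.IH[of "Suc k" "lift 0 s"] T_Lam.prems T_Lam.hyps by (auto intro!: typing.T_Lam)
next
  case (T_TLam n G b B)
  have "typing (Suc n) (map (tshift 0) (take k G @ drop (Suc k) G)) (ttshift 0 s) (tshift 0 (G ! k))"
    using typing_ttshift T_TLam.prems by blast
  then have "typing (Suc n) (take k (map (tshift 0) G) @ drop (Suc k) (map (tshift 0) G)) (ttshift 0 s) ((map (tshift 0) G) ! k)"
    using T_TLam.prems by (simp add: take_map drop_map)
  then show ?case using T_TLam.IH[of k "ttshift 0 s"] T_TLam.prems
    by (auto intro!: typing.T_TLam simp: take_map drop_map)
qed (fastforce intro: typing.intros)+

lemma typing_ttsubst: "typing m G t B \<Longrightarrow> m = Suc n \<Longrightarrow> k \<le> n \<Longrightarrow> wfty n A \<Longrightarrow>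
  typing n (map (tsubst k A) G) (ttsubst k A t) (tsubst k A B)"
proof (induction arbitrary: n k A rule: typing.induct)
  case (T_FVar T m G x)
  then show ?case using tsubst_closed[of 0 T k A] by (auto intro: typing.T_FVar)
next
  case (T_BVar i G m)
  then show ?case using typing.T_BVar[of i "map (tsubst k A) G" n] by simp
next
  case (T_Lam m C G b B)
  then show ?case by (auto intro!: typing.T_Lam wfty_tsubst)
next
  case (T_TLam m G b B)
  have eq: "map (tsubst (Suc k) (tshift 0 A)) (map (tshift 0) G) = map (tshift 0) (map (tsubst k A) G)"
    by (induction G) (simp_all add: tsubst_tshift_comm[of 0 k A, simplified])
  have wf: "wfty (Suc n) (tshift 0 A)" using T_TLam.prems wfty_tshift by blast
  have "typing (Suc n) (map (tsubst (Suc k) (tshift 0 A)) (map (tshift 0) G)) (ttsubst (Suc k) (tshift 0 A) b) (tsubst (Suc k) (tshift 0 A) B)"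
    by (rule T_TLam.IH) (use T_TLam.prems wf in auto)
  then have "typing (Suc n) (map (tshift 0) (map (tsubst k A) G)) (ttsubst (Suc k) (tshift 0 A) b) (tsubst (Suc k) (tshift 0 A) B)"
    unfolding eq .
  from typing.T_TLam[OF this] show ?case by simp
next
  case (T_TApp m G u D C)
  have "tsubst k A (tsubst 0 C D) = tsubst 0 (tsubst k A C) (tsubst (Suc k) (tshift 0 A) D)"
    using tsubst_tsubst[of 0 k A C D] by simp
  moreover have "wfty n (tsubst k A C)" using T_TApp wfty_tsubst by blast
  ultimately show ?case using T_TApp.IH[of n k A] T_TApp.prems by (auto intro!: typing.T_TApp)
qed (fastforce intro: typing.intros)+




lemma tshift_eq_Arr: "tshift k U = Arr X Y \<longleftrightarrow> (\<exists>X' Y'. U = Arr X' Y' \<and> X = tshift k X' \<and> Y = tshift k Y')"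
  by (cases U) auto
lemma tshift_eq_Prod: "tshift k U = Prod X Y \<longleftrightarrow> (\<exists>X' Y'. U = Prod X' Y' \<and> X = tshift k X' \<and> Y = tshift k Y')"
  by (cases U) auto
lemma tshift_eq_All: "tshift k U = All X \<longleftrightarrow> (\<exists>X'. U = All X' \<and> X = tshift (Suc k) X')"
  by (cases U) auto

lemma typing_lift_inv: "typing n (take k G @ C # drop k G) (lift k t) B \<Longrightarrow> k \<le> length G \<Longrightarrow> typing n G t B"
proof (induction t arbitrary: n G k B C)
  case Star then show ?case by (auto elim: tyStar intro: typing.intros)
next
  case (FVar x T) then show ?case by (auto elim: tyFVar intro: typing.intros)
next
  case (BVar i)
  show ?case
  proof (cases "i < k")
    case True
    have "i < length G" using True BVar.prems(2) by simp
    moreover have "B = G ! i" using True BVar.prems by (auto elim!: tyBVar simp: nth_append)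
    ultimately show ?thesis using typing.T_BVar[of i G n] True by simp
  next
    case False
    have lk: "length (take k G) = k" using BVar.prems(2) by simp
    from BVar.prems(1) False have bb: "Suc i < length G + 1" "B = (take k G @ C # drop k G) ! Suc i"
      by (auto elim!: tyBVar)
    then have il: "i < length G" by simp
    have "(take k G @ C # drop k G) ! Suc i = G ! i"
      using False lk il BVar.prems(2) by (simp add: nth_append Suc_diff_le)
    then show ?thesis using bb il typing.T_BVar[of i G n] False by simp
  qed
next
  case (Lam A b)
  from Lam.prems(1) obtain B' where B: "B = Arr A B'" "wfty n A"
    and tb: "typing n (A # (take k G @ C # drop k G)) (lift (Suc k) b) B'"
    by (auto elim: tyLam)
  have "typing n (take (Suc k) (A # G) @ C # drop (Suc k) (A # G)) (lift (Suc k) b) B'" using tb by simp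
  then have "typing n (A # G) b B'" using Lam.IH Lam.prems by fastforce
  then show ?case using B by (auto intro: typing.T_Lam)
next
  case (App u v)
  from App.prems show ?case by (auto elim!: tyApp) (meson App.IH typing.T_App)+
next
  case (Pair u v)
  from Pair.prems show ?case by (auto elim!: tyPair) (meson Pair.IH typing.T_Pair)+
next
  case (Pi1 u)
  from Pi1.prems show ?case by (auto elim!: tyPi1) (meson Pi1.IH typing.T_Pi1)+
next
  case (Pi2 u)
  from Pi2.prems show ?case by (auto elim!: tyPi2) (meson Pi2.IH typing.T_Pi2)+
next
  case (TLam b)
  from TLam.prems(1) obtain B' where B: "B = All B'"
    and tb: "typing (Suc n) (map (tshift 0) (take k G @ C # drop k G)) (lift k b) B'"
    by (auto elim: tyTLam)
  have "typing (Suc n) (take k (map (tshift 0) G) @ tshift 0 C # drop k (map (tshift 0) G)) (lift k b) B'"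
    using tb by (simp add: take_map drop_map)
  then have "typing (Suc n) (map (tshift 0) G) b B'" using TLam.IH TLam.prems by fastforce
  then show ?case using B by (auto intro: typing.T_TLam)
next
  case (TApp u A)
  from TApp.prems show ?case by (auto elim!: tyTApp) (meson TApp.IH typing.T_TApp)+
qed

lemma typing_ttshift_inv: "typing (Suc n) (map (tshift k) G) (ttshift k s) C \<Longrightarrow> k \<le> n \<Longrightarrow>
   \<exists>C'. C = tshift k C' \<and> typing n G s C'"
proof (induction s arbitrary: n k G C)
  case Star
  from Star.prems have "C = Top" by (auto elim: tyStar)
  then show ?case by (auto intro!: exI[of _ Top] typing.T_Star)
next
  case (FVar x T)
  from FVar.prems have "C = T" "wfty 0 T" by (auto elim: tyFVar)
  then show ?case using tshift_closed[of 0 T k] by (auto intro!: exI[of _ T] typing.T_FVar)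
next
  case (BVar i)
  from BVar.prems have "C = tshift k (G ! i)" "i < length G" by (auto elim: tyBVar)
  then show ?case by (auto intro!: exI[of _ "G ! i"] typing.T_BVar)
next
  case (Lam A b)
  from Lam.prems(1) obtain D where C: "C = Arr (tshift k A) D" "wfty (Suc n) (tshift k A)"
    and tb: "typing (Suc n) (tshift k A # map (tshift k) G) (ttshift k b) D"
    by (auto elim: tyLam)
  have "typing (Suc n) (map (tshift k) (A # G)) (ttshift k b) D" using tb by simp
  then obtain D' where "D = tshift k D'" "typing n (A # G) b D'" using Lam.IH Lam.prems by blast
  moreover have "wfty n A" using C(2) Lam.prems(2) wfty_tshift_inv by blast
  ultimately show ?case using C by (auto intro!: exI[of _ "Arr A D'"] typing.T_Lam)
next
  case (App u v)
  from App.prems(1) obtain X where tu: "typing (Suc n) (map (tshift k) G) (ttshift k u) (Arr X C)"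
    and tv: "typing (Suc n) (map (tshift k) G) (ttshift k v) X" by (auto elim: tyApp)
  obtain U where U: "Arr X C = tshift k U" "typing n G u U" using App.IH(1)[OF tu App.prems(2)] by blast
  obtain V where V: "X = tshift k V" "typing n G v V" using App.IH(2)[OF tv App.prems(2)] by blast
  from U(1) obtain X' C' where "U = Arr X' C'" "X = tshift k X'" "C = tshift k C'"
    by (metis tshift_eq_Arr)
  with V U show ?case by (metis tshift_inj typing.T_App)
next
  case (Pair u v)
  from Pair.prems(1) obtain X Y where C: "C = Prod X Y" and tu: "typing (Suc n) (map (tshift k) G) (ttshift k u) X"
    and tv: "typing (Suc n) (map (tshift k) G) (ttshift k v) Y" by (auto elim: tyPair)
  obtain U where U: "X = tshift k U" "typing n G u U" using Pair.IH(1)[OF tu Pair.prems(2)] by blast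
  obtain V where V: "Y = tshift k V" "typing n G v V" using Pair.IH(2)[OF tv Pair.prems(2)] by blast
  show ?case using U V C by (auto intro!: exI[of _ "Prod U V"] typing.T_Pair)
next
  case (Pi1 u)
  from Pi1.prems(1) obtain Y where tu: "typing (Suc n) (map (tshift k) G) (ttshift k u) (Prod C Y)" by (auto elim: tyPi1)
  obtain U where U: "Prod C Y = tshift k U" "typing n G u U" using Pi1.IH[OF tu Pi1.prems(2)] by blast
  then show ?case by (metis tshift_eq_Prod typing.T_Pi1)
next
  case (Pi2 u)
  from Pi2.prems(1) obtain Y where tu: "typing (Suc n) (map (tshift k) G) (ttshift k u) (Prod Y C)" by (auto elim: tyPi2)
  obtain U where U: "Prod Y C = tshift k U" "typing n G u U" using Pi2.IH[OF tu Pi2.prems(2)] by blast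
  then show ?case by (metis tshift_eq_Prod typing.T_Pi2)
next
  case (TLam b)
  from TLam.prems(1) obtain D where C: "C = All D"
    and tb: "typing (Suc (Suc n)) (map (tshift 0) (map (tshift k) G)) (ttshift (Suc k) b) D"
    by (auto elim: tyTLam)
  have eq: "map (tshift 0) (map (tshift k) G) = map (tshift (Suc k)) (map (tshift 0) G)"
    by (induction G) (simp_all add: tshift_tshift)
  have "typing (Suc (Suc n)) (map (tshift (Suc k)) (map (tshift 0) G)) (ttshift (Suc k) b) D"
    using tb unfolding eq .
  then obtain D' where "D = tshift (Suc k) D'" "typing (Suc n) (map (tshift 0) G) b D'"
    using TLam.IH TLam.prems(2) by (meson Suc_le_mono)
  then show ?case using C by (auto intro!: exI[of _ "All D'"] typing.T_TLam)
next
  case (TApp u A)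
  from TApp.prems(1) obtain D where C: "C = tsubst 0 (tshift k A) D" and wf: "wfty (Suc n) (tshift k A)"
    and tu: "typing (Suc n) (map (tshift k) G) (ttshift k u) (All D)" by (auto elim: tyTApp)
  obtain U where U: "All D = tshift k U" "typing n G u U" using TApp.IH[OF tu TApp.prems(2)] by blast
  then obtain D' where D': "U = All D'" "D = tshift (Suc k) D'" by (metis tshift_eq_All)
  have "C = tshift k (tsubst 0 A D')" using C D' tshift_tsubst[of 0 k A D'] by simp
  moreover have "wfty n A" using wf TApp.prems(2) wfty_tshift_inv by blast
  ultimately show ?case using U D' by (auto intro!: exI[of _ "tsubst 0 A D'"] typing.T_TApp)
qed




lemma star_not_App[simp]: "star T \<noteq> App u v" by (cases T) auto
lemma star_not_Pi1[simp]: "star T \<noteq> Pi1 u" by (cases T) auto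
lemma star_not_Pi2[simp]: "star T \<noteq> Pi2 u" by (cases T) auto
lemma star_not_TApp[simp]: "star T \<noteq> TApp u A" by (cases T) auto
lemma star_not_FVar[simp]: "star T \<noteq> FVar x S" by (cases T) auto
lemma star_not_BVar[simp]: "star T \<noteq> BVar i" by (cases T) auto

lemma typing_star: "iso T \<Longrightarrow> wfty n T \<Longrightarrow> typing n G (star T) T"
proof (induction arbitrary: n G rule: iso.induct)
  case iso_Top then show ?case by (simp add: typing.T_Star)
next
  case (iso_Arr T A) then show ?case by (auto intro: typing.T_Lam)
next
  case (iso_All T) then show ?case by (auto intro: typing.T_TLam)
next
  case (iso_Prod A B) then show ?case by (auto intro: typing.T_Pair)
qed

lemma star_typing_unique: "iso T \<Longrightarrow> typing n G (star T) T' \<Longrightarrow> T' = T"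
proof (induction arbitrary: n G T' rule: iso.induct)
  case iso_Top then show ?case by (auto elim: tyStar)
next
  case (iso_Arr T A) then show ?case by (auto elim!: tyLam)
next
  case (iso_All T) then show ?case by (auto elim!: tyTLam)
next
  case (iso_Prod A B) then show ?case by (auto elim!: tyPair)
qed

inductive_cases redStar: "red n G Star s"
inductive_cases redLam: "red n G (Lam A b) s"
inductive_cases redPair: "red n G (Pair u v) s"
inductive_cases redTLam: "red n G (TLam b) s"
inductive_cases redApp: "red n G (App u v) s"
inductive_cases redPi1: "red n G (Pi1 u) s"
inductive_cases redPi2: "red n G (Pi2 u) s"
inductive_cases redFVar: "red n G (FVar x T) s"

lemma star_normal: "iso T \<Longrightarrow> \<not> red n G (star T) s"
proof (induction arbitrary: n G s rule: iso.induct)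
  case iso_Top
  show ?case
  proof
    assume "red n G (star Top) s"
    then show False by (cases rule: redStar) (auto elim: tyStar)
  qed
next
  case (iso_Arr T A)
  show ?case
  proof
    assume "red n G (star (Arr A T)) s"
    then have "red n G (Lam A (star T)) s" by simp
    then show False
      by (cases rule: redLam) (auto simp: iso_Arr.IH dest: star_typing_unique[OF iso.iso_Arr[OF iso_Arr.hyps], simplified])
  qed
next
  case (iso_All T)
  show ?case
  proof
    assume "red n G (star (All T)) s"
    then have "red n G (TLam (star T)) s" by simp
    then show False
      by (cases rule: redTLam) (auto simp: iso_All.IH dest: star_typing_unique[OF iso.iso_All[OF iso_All.hyps], simplified])
  qed
next
  case (iso_Prod A B)
  show ?case
  proof
    assume "red n G (star (Prod A B)) s"
    then have "red n G (Pair (star A) (star B)) s" by simp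
    then show False
      by (cases rule: redPair) (auto simp: iso_Prod.IH dest: star_typing_unique[OF iso.iso_Prod[OF iso_Prod.hyps], simplified])
  qed
qed




lemma subject_reduction: "red n G t s \<Longrightarrow> typing n G t T \<Longrightarrow> (\<forall>C\<in>set G. wfty n C) \<Longrightarrow> typing n G s T"
proof (induction arbitrary: T rule: red.induct)
  case (r_beta n G A u v)
  from r_beta.prems(1) obtain A' where tl: "typing n G (Lam A u) (Arr A' T)" and tv: "typing n G v A'"
    by (auto elim: tyApp)
  from tl have "A' = A" "typing n (A # G) u T" by (auto elim: tyLam)
  then show ?case using typing_subst[of n "A # G" u T 0 v] tv by simp
next
  case (r_proj1 n G u v) then show ?case by (auto elim!: tyPi1 tyPair)
next
  case (r_proj2 n G u v) then show ?case by (auto elim!: tyPi2 tyPair)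
next
  case (r_eta n G A t)
  from r_eta.prems(1) obtain B where T: "T = Arr A B"
    and tb: "typing n (A # G) (App (lift 0 t) (BVar 0)) B" by (auto elim: tyLam)
  from tb obtain X where "typing n (A # G) (lift 0 t) (Arr X B)" "typing n (A # G) (BVar 0) X"
    by (auto elim: tyApp)
  then have "typing n (take 0 G @ A # drop 0 G) (lift 0 t) (Arr A B)" by (auto elim: tyBVar)
  then show ?case using typing_lift_inv T by blast
next
  case (r_SP n G u)
  from r_SP.prems(1) obtain X Y where T: "T = Prod X Y" and a: "typing n G (Pi1 u) X" and b: "typing n G (Pi2 u) Y"
    by (auto elim: tyPair)
  from a obtain Y' where a': "typing n G u (Prod X Y')" by (auto elim: tyPi1)
  from b obtain X' where b': "typing n G u (Prod X' Y)" by (auto elim: tyPi2)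
  from typing_unique[OF a' b'] a' T show ?case by simp
next
  case (r_gentop n G u T' )
  then have "T = T'" using typing_unique by blast
  moreover have "wfty n T'" using r_gentop typing_wfty by blast
  ultimately show ?case using typing_star r_gentop by blast
next
  case (r_eta_top A n G t)
  from r_eta_top.prems(1) obtain B where T: "T = Arr A B"
    and tb: "typing n (A # G) (App (lift 0 t) (star A)) B" by (auto elim: tyLam)
  from tb obtain X where "typing n (A # G) (lift 0 t) (Arr X B)" "typing n (A # G) (star A) X"
    by (auto elim: tyApp)
  then have "typing n (take 0 G @ A # drop 0 G) (lift 0 t) (Arr A B)"
    using star_typing_unique[OF r_eta_top.hyps] by auto
  then show ?case using typing_lift_inv T by blast
next
  case (r_pair_top1 n G u A T0)
  from r_pair_top1.prems(1) obtain X Y where T: "T = Prod X Y" and a: "typing n G (Pi1 u) X"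
     and b: "typing n G (star T0) Y" by (auto elim: tyPair)
  from a obtain Y' where a': "typing n G u (Prod X Y')" by (auto elim: tyPi1)
  have "Y = T0" using star_typing_unique[OF r_pair_top1.hyps(2) b] .
  with typing_unique[OF a' r_pair_top1.hyps(1)] a' T show ?case by simp
next
  case (r_pair_top2 n G u T0 B)
  from r_pair_top2.prems(1) obtain X Y where T: "T = Prod X Y" and a: "typing n G (Pi2 u) Y"
     and b: "typing n G (star T0) X" by (auto elim: tyPair)
  from a obtain X' where a': "typing n G u (Prod X' Y)" by (auto elim: tyPi2)
  have "X = T0" using star_typing_unique[OF r_pair_top2.hyps(2) b] .
  with typing_unique[OF a' r_pair_top2.hyps(1)] a' T show ?case by simp
next
  case (r_beta2 n G t A)
  from r_beta2.prems(1) obtain B where T: "T = tsubst 0 A B" and tl: "typing n G (TLam t) (All B)"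
    and wf: "wfty n A" by (auto elim: tyTApp)
  from tl have tb: "typing (Suc n) (map (tshift 0) G) t B" by (auto elim: tyTLam)
  have "typing n (map (tsubst 0 A) (map (tshift 0) G)) (ttsubst 0 A t) (tsubst 0 A B)"
    using typing_ttsubst[OF tb refl _ wf] by simp
  moreover have "map (tsubst 0 A) (map (tshift 0) G) = G"
    by (induction G) (simp_all add: tsubst_tshift_same)
  ultimately show ?case using T by simp
next
  case (r_eta2 n G s)
  from r_eta2.prems(1) obtain B where T: "T = All B"
    and tb: "typing (Suc n) (map (tshift 0) G) (TApp (ttshift 0 s) (TBnd 0)) B" by (auto elim: tyTLam)
  from tb obtain D where B: "B = tsubst 0 (TBnd 0) D" and ts: "typing (Suc n) (map (tshift 0) G) (ttshift 0 s) (All D)"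
    by (auto elim: tyTApp)
  from typing_ttshift_inv[OF ts] obtain U where U: "All D = tshift 0 U" "typing n G s U" by blast
  then obtain D' where D': "U = All D'" "D = tshift (Suc 0) D'" by (metis tshift_eq_All)
  have "B = D'" using B D' tsubst_TBnd_tshift[of 0 D'] by simp
  then show ?case using T U D' by simp
next
  case (c_Lam n A G b b')
  from c_Lam.prems(1) obtain B where "T = Arr A B" "wfty n A" "typing n (A # G) b B" by (auto elim: tyLam)
  then show ?case using c_Lam by (auto intro: typing.T_Lam)
next
  case (c_AppL n G u u' v)
  from c_AppL.prems(1) obtain X where "typing n G u (Arr X T)" "typing n G v X" by (auto elim: tyApp)
  then show ?case using c_AppL by (auto intro: typing.T_App)
next
  case (c_AppR n G v v' u)
  from c_AppR.prems(1) obtain X where "typing n G u (Arr X T)" "typing n G v X" by (auto elim: tyApp)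
  then show ?case using c_AppR by (auto intro: typing.T_App)
next
  case (c_PairL n G u u' v)
  from c_PairL.prems(1) obtain X Y where "T = Prod X Y" "typing n G u X" "typing n G v Y" by (auto elim: tyPair)
  then show ?case using c_PairL by (auto intro: typing.T_Pair)
next
  case (c_PairR n G v v' u)
  from c_PairR.prems(1) obtain X Y where "T = Prod X Y" "typing n G u X" "typing n G v Y" by (auto elim: tyPair)
  then show ?case using c_PairR by (auto intro: typing.T_Pair)
next
  case (c_Pi1 n G u u')
  from c_Pi1.prems(1) obtain Y where "typing n G u (Prod T Y)" by (auto elim: tyPi1)
  then show ?case using c_Pi1 by (auto intro: typing.T_Pi1)
next
  case (c_Pi2 n G u u')
  from c_Pi2.prems(1) obtain Y where "typing n G u (Prod Y T)" by (auto elim: tyPi2)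
  then show ?case using c_Pi2 by (auto intro: typing.T_Pi2)
next
  case (c_TLam n G b b')
  from c_TLam.prems(1) obtain B where "T = All B" "typing (Suc n) (map (tshift 0) G) b B" by (auto elim: tyTLam)
  moreover have "\<forall>C\<in>set (map (tshift 0) G). wfty (Suc n) C" using c_TLam.prems(2) wfty_tshift by auto
  ultimately show ?case using c_TLam.IH by (auto intro: typing.T_TLam)
next
  case (c_TApp n G u u' A)
  from c_TApp.prems(1) obtain B where "T = tsubst 0 A B" "typing n G u (All B)" "wfty n A" by (auto elim: tyTApp)
  then show ?case using c_TApp by (auto intro: typing.T_TApp)
qed




fun unz :: "nat \<Rightarrow> trm \<Rightarrow> trm" where
  "unz z Star = Star"
| "unz z (FVar x T) = (if x = z \<and> T = Top then Star else FVar x T)"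
| "unz z (BVar i) = BVar i"
| "unz z (Lam A b) = Lam A (unz z b)"
| "unz z (App u v) = App (unz z u) (unz z v)"
| "unz z (Pair u v) = Pair (unz z u) (unz z v)"
| "unz z (Pi1 u) = Pi1 (unz z u)"
| "unz z (Pi2 u) = Pi2 (unz z u)"
| "unz z (TLam b) = TLam (unz z b)"
| "unz z (TApp u A) = TApp (unz z u) A"

fun cnt :: "nat \<Rightarrow> trm \<Rightarrow> nat" where
  "cnt z Star = 0"
| "cnt z (FVar x T) = (if x = z \<and> T = Top then 1 else 0)"
| "cnt z (BVar i) = 0"
| "cnt z (Lam A b) = cnt z b"
| "cnt z (App u v) = cnt z u + cnt z v"
| "cnt z (Pair u v) = cnt z u + cnt z v"
| "cnt z (Pi1 u) = cnt z u"
| "cnt z (Pi2 u) = cnt z u"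
| "cnt z (TLam b) = cnt z b"
| "cnt z (TApp u A) = cnt z u"

lemma unz_lift[simp]: "unz z (lift k t) = lift k (unz z t)"
  by (induction t arbitrary: k) auto
lemma unz_ttshift[simp]: "unz z (ttshift k t) = ttshift k (unz z t)"
  by (induction t arbitrary: k) auto
lemma unz_subst[simp]: "unz z (subst k s t) = subst k (unz z s) (unz z t)"
  by (induction t arbitrary: k s) auto
lemma unz_ttsubst[simp]: "unz z (ttsubst k A t) = ttsubst k A (unz z t)"
  by (induction t arbitrary: k A) auto
lemma unz_star[simp]: "unz z (star T) = star T"
  by (induction T) auto
lemma cnt_star[simp]: "cnt z (star T) = 0"
  by (induction T) auto
lemma cnt0: "cnt z t = 0 \<Longrightarrow> unz z t = t"
  by (induction t) auto

lemma typing_unz: "typing n G t T \<Longrightarrow> typing n G (unz z t) T"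
  by (induction rule: typing.induct) (auto intro: typing.intros)

lemma typing_repl: "typing n G t T \<Longrightarrow> typing n G (repl_star z t) T"
  by (induction rule: typing.induct) (auto intro: typing.intros)

lemma fvs_unz: "(z, Top) \<notin> fvs (unz z t)"
  by (induction t) auto

lemma unz_repl: "(z, Top) \<notin> fvs t \<Longrightarrow> unz z (repl_star z t) = t"
  by (induction t) auto

lemma red_unz: "red n G t s \<Longrightarrow> red n G (unz z t) (unz z s) \<or> (unz z t = unz z s \<and> cnt z s < cnt z t)"
proof (induction rule: red.induct)
  case (r_beta n G A u v) then show ?case by (auto intro: red.r_beta)
next
  case (r_proj1 n G u v) then show ?case by (auto intro: red.r_proj1)
next
  case (r_proj2 n G u v) then show ?case by (auto intro: red.r_proj2)
next
  case (r_eta n G A t) then show ?case by (auto intro: red.r_eta)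
next
  case (r_SP n G u) then show ?case by (auto intro: red.r_SP)
next
  case (r_gentop n G u T)
  show ?case
  proof (cases "unz z u = star T")
    case True
    have "cnt z u \<noteq> 0" using True r_gentop.hyps(3) cnt0 by metis
    then show ?thesis using True by simp
  next
    case False
    then show ?thesis using r_gentop typing_unz red.r_gentop by fastforce
  qed
next
  case (r_eta_top A n G t)
  then show ?case using red.r_eta_top[OF r_eta_top.hyps, of n G "unz z t"] by simp
next
  case (r_pair_top1 n G u A T)
  then show ?case using red.r_pair_top1[OF typing_unz[OF r_pair_top1.hyps(1)] r_pair_top1.hyps(2)] by simp
next
  case (r_pair_top2 n G u T B)
  then show ?case using red.r_pair_top2[OF typing_unz[OF r_pair_top2.hyps(1)] r_pair_top2.hyps(2)] by simp
next
  case (r_beta2 n G t A) then show ?case by (auto intro: red.r_beta2)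
next
  case (r_eta2 n G s) then show ?case by (auto intro: red.r_eta2)
qed (auto intro: red.intros)




lemma step_eq: "step = red 0 []"
  by (intro ext) (simp add: step_def)

lemma SN_step: "SN t \<Longrightarrow> step t t' \<Longrightarrow> SN t'"
proof -
  assume sn: "SN t" and st: "step t t'"
  show "SN t'" unfolding SN_def
  proof
    assume "\<exists>f. f 0 = t' \<and> (\<forall>i. step (f i) (f (Suc i)))"
    then obtain f where f: "f 0 = t'" "\<forall>i. step (f i) (f (Suc i))" by blast
    define g where "g i = (case i of 0 \<Rightarrow> t | Suc j \<Rightarrow> f j)" for i
    have "g 0 = t \<and> (\<forall>i. step (g i) (g (Suc i)))"
      using f st by (auto simp: g_def split: nat.splits)
    then show False using sn unfolding SN_def by blast
  qed
qed

lemma SN_intro: "(\<And>t'. step t t' \<Longrightarrow> SN t') \<Longrightarrow> SN t"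
proof -
  assume h: "\<And>t'. step t t' \<Longrightarrow> SN t'"
  show "SN t" unfolding SN_def
  proof
    assume "\<exists>f. f 0 = t \<and> (\<forall>i. step (f i) (f (Suc i)))"
    then obtain f where f: "f 0 = t" "\<forall>i. step (f i) (f (Suc i))" by blast
    have "SN (f 1)" using h f by (metis One_nat_def)
    moreover have "\<exists>g. g 0 = f 1 \<and> (\<forall>i. step (g i) (g (Suc i)))"
      by (rule exI[of _ "\<lambda>i. f (Suc i)"]) (use f in simp)
    ultimately show False unfolding SN_def by blast
  qed
qed

lemma SN_induct[consumes 1, case_names step]:
  assumes sn: "SN t" and h: "\<And>t. SN t \<Longrightarrow> (\<And>t'. step t t' \<Longrightarrow> P t') \<Longrightarrow> P t"
  shows "P t"
proof (rule ccontr)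
  assume np: "\<not> P t"
  define Q where "Q n x = (SN x \<and> \<not> P x \<and> (n = 0 \<longrightarrow> x = t))" for n :: nat and x
  have 1: "\<exists>x. Q 0 x" using sn np by (auto simp: Q_def)
  have 2: "\<exists>y. Q (Suc n) y \<and> step x y" if "Q n x" for x n
  proof -
    from that have "SN x" "\<not> P x" by (auto simp: Q_def)
    then obtain y where "step x y" "\<not> P y" using h by blast
    then show ?thesis using SN_step \<open>SN x\<close> by (auto simp: Q_def)
  qed
  obtain f where f: "\<forall>n. Q n (f n) \<and> step (f n) (f (Suc n))"
    using dependent_nat_choice[of Q "\<lambda>n x y. step x y", OF 1 2] by blast
  then have "f 0 = t" by (auto simp: Q_def)
  with f sn show False unfolding SN_def by blast
qed

lemma SN_ctx: assumes "\<And>x y. step x y \<Longrightarrow> step (C x) (C y)" and "SN (C t)" shows "SN t"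
  unfolding SN_def
proof
  assume "\<exists>f. f 0 = t \<and> (\<forall>i. step (f i) (f (Suc i)))"
  then obtain f where f: "f 0 = t" "\<forall>i. step (f i) (f (Suc i))" by blast
  then have "\<exists>g. g 0 = C t \<and> (\<forall>i. step (g i) (g (Suc i)))"
    by (intro exI[of _ "\<lambda>i. C (f i)"]) (use assms(1) in simp)
  then show False using assms(2) unfolding SN_def by blast
qed

lemma SN_App: "SN (App t u) \<Longrightarrow> SN t"
  by (rule SN_ctx[of "\<lambda>x. App x u"]) (auto simp: step_def intro: red.c_AppL)
lemma SN_Pi1: "SN (Pi1 t) \<Longrightarrow> SN t"
  by (rule SN_ctx[of "\<lambda>x. Pi1 x"]) (auto simp: step_def intro: red.c_Pi1)
lemma SN_Pi2: "SN (Pi2 t) \<Longrightarrow> SN t"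
  by (rule SN_ctx[of "\<lambda>x. Pi2 x"]) (auto simp: step_def intro: red.c_Pi2)

lemma SN_unz_aux: "SN s \<Longrightarrow> unz z t = s \<Longrightarrow> SN t"
proof (induction arbitrary: t rule: SN_induct)
  case (step s)
  show ?case using step.prems
  proof (induction "cnt z t" arbitrary: t rule: less_induct)
    case less
    show ?case
    proof (rule SN_intro)
      fix t' assume "step t t'"
      then have "red 0 [] t t'" by (simp add: step_def)
      from red_unz[OF this, of z]
      show "SN t'"
      proof
        assume "red 0 [] (unz z t) (unz z t')"
        then show "SN t'" using step.IH less.prems by (auto simp: step_def)
      next
        assume "unz z t = unz z t' \<and> cnt z t' < cnt z t"
        then show "SN t'" using less by auto
      qed
    qed
  qed
qed

lemma SN_repl: "SN t \<Longrightarrow> (z, Top) \<notin> fvs t \<Longrightarrow> SN (repl_star z t)"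
  using SN_unz_aux[of t z "repl_star z t"] unz_repl by simp

lemma rt_Lam: "(red n (A # G))\<^sup>*\<^sup>* b b' \<Longrightarrow> (red n G)\<^sup>*\<^sup>* (Lam A b) (Lam A b')"
  by (induction rule: rtranclp_induct) (auto intro: rtranclp.rtrancl_into_rtrancl red.c_Lam)
lemma rt_AppL: "(red n G)\<^sup>*\<^sup>* u u' \<Longrightarrow> (red n G)\<^sup>*\<^sup>* (App u v) (App u' v)"
  by (induction rule: rtranclp_induct) (auto intro: rtranclp.rtrancl_into_rtrancl red.c_AppL)
lemma rt_AppR: "(red n G)\<^sup>*\<^sup>* v v' \<Longrightarrow> (red n G)\<^sup>*\<^sup>* (App u v) (App u v')"
  by (induction rule: rtranclp_induct) (auto intro: rtranclp.rtrancl_into_rtrancl red.c_AppR)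
lemma rt_PairL: "(red n G)\<^sup>*\<^sup>* u u' \<Longrightarrow> (red n G)\<^sup>*\<^sup>* (Pair u v) (Pair u' v)"
  by (induction rule: rtranclp_induct) (auto intro: rtranclp.rtrancl_into_rtrancl red.c_PairL)
lemma rt_PairR: "(red n G)\<^sup>*\<^sup>* v v' \<Longrightarrow> (red n G)\<^sup>*\<^sup>* (Pair u v) (Pair u v')"
  by (induction rule: rtranclp_induct) (auto intro: rtranclp.rtrancl_into_rtrancl red.c_PairR)
lemma rt_Pi1: "(red n G)\<^sup>*\<^sup>* u u' \<Longrightarrow> (red n G)\<^sup>*\<^sup>* (Pi1 u) (Pi1 u')"
  by (induction rule: rtranclp_induct) (auto intro: rtranclp.rtrancl_into_rtrancl red.c_Pi1)
lemma rt_Pi2: "(red n G)\<^sup>*\<^sup>* u u' \<Longrightarrow> (red n G)\<^sup>*\<^sup>* (Pi2 u) (Pi2 u')"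
  by (induction rule: rtranclp_induct) (auto intro: rtranclp.rtrancl_into_rtrancl red.c_Pi2)
lemma rt_TLam: "(red (Suc n) (map (tshift 0) G))\<^sup>*\<^sup>* b b' \<Longrightarrow> (red n G)\<^sup>*\<^sup>* (TLam b) (TLam b')"
  by (induction rule: rtranclp_induct) (auto intro: rtranclp.rtrancl_into_rtrancl red.c_TLam)
lemma rt_TApp: "(red n G)\<^sup>*\<^sup>* u u' \<Longrightarrow> (red n G)\<^sup>*\<^sup>* (TApp u A) (TApp u' A)"
  by (induction rule: rtranclp_induct) (auto intro: rtranclp.rtrancl_into_rtrancl red.c_TApp)

lemma red_zvar: "red n G (FVar z Top) Star"
proof -
  have "typing n G (FVar z Top) Top" by (rule typing.T_FVar) simp
  from red.r_gentop[OF this iso.iso_Top] show ?thesis by simp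
qed

lemma rt_unz: "(red n G)\<^sup>*\<^sup>* t (unz z t)"
proof (induction t arbitrary: n G)
  case (FVar x T) then show ?case using red_zvar by auto
next
  case (Lam A b) then show ?case using rt_Lam by simp
next
  case (App u v) then show ?case using rt_AppL rt_AppR by (metis rtranclp_trans unz.simps(5))
next
  case (Pair u v) then show ?case using rt_PairL rt_PairR by (metis rtranclp_trans unz.simps(6))
next
  case (Pi1 u) then show ?case using rt_Pi1 by simp
next
  case (Pi2 u) then show ?case using rt_Pi2 by simp
next
  case (TLam b) then show ?case using rt_TLam by simp
next
  case (TApp u A) then show ?case using rt_TApp by simp
qed auto

lemma rt_repl_unz: "(red n G)\<^sup>*\<^sup>* (repl_star z (unz z t)) t"
proof (induction t arbitrary: n G)
  case Star then show ?case using red_zvar by auto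
next
  case (Lam A b) then show ?case using rt_Lam by simp
next
  case (App u v) then show ?case using rt_AppL rt_AppR by (metis rtranclp_trans unz.simps(5) repl_star.simps(5))
next
  case (Pair u v) then show ?case using rt_PairL rt_PairR by (metis rtranclp_trans unz.simps(6) repl_star.simps(6))
next
  case (Pi1 u) then show ?case using rt_Pi1 by simp
next
  case (Pi2 u) then show ?case using rt_Pi2 by simp
next
  case (TLam b) then show ?case using rt_TLam by simp
next
  case (TApp u A) then show ?case using rt_TApp by simp
qed auto

lemma subst_star[simp]: "subst k s (star T) = star T"
  by (induction T arbitrary: k s) auto

lemma App_red: "red n G (App u v) s \<Longrightarrow>
  (\<exists>A b. u = Lam A b \<and> s = subst 0 v b) \<or> (\<exists>T'. s = star T' \<and> iso T' \<and> typing n G (App u v) T') \<or>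
  (\<exists>u'. s = App u' v \<and> red n G u u') \<or> (\<exists>v'. s = App u v' \<and> red n G v v')"
  by (cases rule: redApp) auto

lemma Pi1_red: "red n G (Pi1 u) s \<Longrightarrow>
  (\<exists>b. u = Pair s b) \<or> (\<exists>T'. s = star T' \<and> iso T' \<and> typing n G (Pi1 u) T') \<or>
  (\<exists>u'. s = Pi1 u' \<and> red n G u u')"
  by (cases rule: redPi1) auto

lemma Pi2_red: "red n G (Pi2 u) s \<Longrightarrow>
  (\<exists>a. u = Pair a s) \<or> (\<exists>T'. s = star T' \<and> iso T' \<and> typing n G (Pi2 u) T') \<or>
  (\<exists>u'. s = Pi2 u' \<and> red n G u u')"
  by (cases rule: redPi2) auto

lemma FVar_red: "red n G (FVar x T) s \<Longrightarrow> (\<exists>T'. s = star T' \<and> iso T' \<and> typing n G (FVar x T) T')"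
  by (cases rule: redFVar) auto




lemma RC_typed: "RC T R \<Longrightarrow> t \<in> R \<Longrightarrow> has_type t T" unfolding RC_def by blast
lemma RC_star: "RC T R \<Longrightarrow> iso T \<Longrightarrow> star T \<in> R" unfolding RC_def by blast
lemma RC_var: "RC T R \<Longrightarrow> t \<in> R \<Longrightarrow> (z, Top) \<notin> fvs t \<Longrightarrow> repl_star z t \<in> R"
  unfolding RC_def variant_closed_def by blast
lemma RC_SN: "RC T R \<Longrightarrow> t \<in> R \<Longrightarrow> SN t" unfolding RC_def by blast
lemma RC_step: "RC T R \<Longrightarrow> t \<in> R \<Longrightarrow> step t t' \<Longrightarrow> t' \<in> R" unfolding RC_def by blast
lemma RC_neutral: "RC T R \<Longrightarrow> has_type t T \<Longrightarrow> neutral t \<Longrightarrow> (\<And>t'. step t t' \<Longrightarrow> t' \<in> R) \<Longrightarrow> t \<in> R"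
  unfolding RC_def by blast

lemma RC_rt: "RC T R \<Longrightarrow> t \<in> R \<Longrightarrow> step\<^sup>*\<^sup>* t t' \<Longrightarrow> t' \<in> R"
proof -
  assume rc: "RC T R" and t: "t \<in> R" and st: "step\<^sup>*\<^sup>* t t'"
  from st t show "t' \<in> R" by (induction rule: rtranclp_induct) (auto intro: RC_step[OF rc])
qed

lemma has_type_step: "has_type t T \<Longrightarrow> step t t' \<Longrightarrow> has_type t' T"
  unfolding has_type_def step_def using subject_reduction[of 0 "[]" t t' T] by simp

lemma star_has_type: "is_type T \<Longrightarrow> iso T \<Longrightarrow> has_type (star T) T"
  by (simp add: has_type_def is_type_def typing_star)

lemma star_no_step: "iso T \<Longrightarrow> \<not> step (star T) s"
  by (simp add: step_def star_normal)

lemma part1: "is_type T \<Longrightarrow> RC T (SNset T)"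
  unfolding RC_def SNset_def variant_closed_def
proof (intro conjI allI impI ballI)
  assume T: "is_type T"
  show "star T \<in> {t. has_type t T \<and> SN t}" if "iso T"
  proof
    show "has_type (star T) T \<and> SN (star T)"
      using that T star_has_type star_no_step[OF that] by (auto intro: SN_intro)
  qed
  show "repl_star z t \<in> {t. has_type t T \<and> SN t}" if "t \<in> {t. has_type t T \<and> SN t}" "(z, Top) \<notin> fvs t" for t z
    using that SN_repl typing_repl by (auto simp: has_type_def)
  show "t' \<in> {t. has_type t T \<and> SN t}" if "t \<in> {t. has_type t T \<and> SN t}" "step t t'" for t t'
    using that has_type_step[of t T t'] SN_step[of t t'] by simp
  show "t \<in> {t. has_type t T \<and> SN t}" if "has_type t T" "neutral t" "\<forall>t'. step t t' \<longrightarrow> t' \<in> {t. has_type t T \<and> SN t}" for t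
    using that SN_intro[of t] by simp
qed (simp_all)

lemma iso_Prod_inv: "iso (Prod A B) \<Longrightarrow> iso A \<and> iso B" by (cases rule: iso.cases) auto
lemma iso_Arr_inv: "iso (Arr A B) \<Longrightarrow> iso B" by (cases rule: iso.cases) auto

lemma neutral_simps[simp]: "neutral (App u v)" "neutral (Pi1 u)" "neutral (Pi2 u)" "neutral (FVar x T)"
  by (auto simp: neutral_def)

lemma var_in_RC: "is_type A \<Longrightarrow> RC A R \<Longrightarrow> FVar 0 A \<in> R"
proof (rule RC_neutral)
  assume A: "is_type A" and rc: "RC A R"
  show "has_type (FVar 0 A) A" using A by (simp add: has_type_def is_type_def typing.T_FVar)
  then have ty: "typing 0 [] (FVar 0 A) A" by (simp add: has_type_def)
  show "t' \<in> R" if "step (FVar 0 A) t'" for t'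
  proof -
    from FVar_red[OF that[unfolded step_def]] obtain T' where "t' = star T'" "iso T'" "typing 0 [] (FVar 0 A) T'" by blast
    then show ?thesis using typing_unique[OF ty] RC_star[OF rc] by auto
  qed
qed (simp_all)




lemma prod_star: assumes A: "is_type A" and B: "is_type B" and R1: "RC A R1" and R2: "RC B R2"
  and iso: "iso (Prod A B)"
  shows "star (Prod A B) \<in> RC_prod A B R1 R2"
proof -
  have iA: "iso A" and iB: "iso B" using iso_Prod_inv[OF iso] by auto
  have "is_type (Prod A B)" using A B by (simp add: is_type_def)
  from star_has_type[OF this iso] have tp: "has_type (star (Prod A B)) (Prod A B)" .
  then have tp': "typing 0 [] (Pair (star A) (star B)) (Prod A B)" by (simp add: has_type_def)
  have "Pi1 (Pair (star A) (star B)) \<in> R1"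
  proof (rule RC_neutral[OF R1])
    show ty: "has_type (Pi1 (Pair (star A) (star B))) A" using typing.T_Pi1[OF tp'] by (simp add: has_type_def)
    show "t' \<in> R1" if "step (Pi1 (Pair (star A) (star B))) t'" for t'
    proof -
      from Pi1_red[OF that[unfolded step_def]] show ?thesis
      proof (elim disjE exE conjE)
        fix b assume "Pair (star A) (star B) = Pair t' b"
        then have "t' = star A" by simp
        then show ?thesis using RC_star[OF R1 iA] by simp
      next
        fix T' assume "t' = star T'" "typing 0 [] (Pi1 (Pair (star A) (star B))) T'"
        moreover have "T' = A" using typing_unique[OF \<open>typing 0 [] (Pi1 (Pair (star A) (star B))) T'\<close>] ty by (simp add: has_type_def)
        ultimately show ?thesis using RC_star[OF R1 iA] by simp
      next
        fix u' assume "red 0 [] (Pair (star A) (star B)) u'"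
        then show ?thesis using star_normal[OF iso] by simp
      qed
    qed
  qed simp
  moreover have "Pi2 (Pair (star A) (star B)) \<in> R2"
  proof (rule RC_neutral[OF R2])
    show ty: "has_type (Pi2 (Pair (star A) (star B))) B" using typing.T_Pi2[OF tp'] by (simp add: has_type_def)
    show "t' \<in> R2" if "step (Pi2 (Pair (star A) (star B))) t'" for t'
    proof -
      from Pi2_red[OF that[unfolded step_def]] show ?thesis
      proof (elim disjE exE conjE)
        fix a assume "Pair (star A) (star B) = Pair a t'"
        then have "t' = star B" by simp
        then show ?thesis using RC_star[OF R2 iB] by simp
      next
        fix T' assume "t' = star T'" "typing 0 [] (Pi2 (Pair (star A) (star B))) T'"
        moreover have "T' = B" using typing_unique[OF \<open>typing 0 [] (Pi2 (Pair (star A) (star B))) T'\<close>] ty by (simp add: has_type_def)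
        ultimately show ?thesis using RC_star[OF R2 iB] by simp
      next
        fix u' assume "red 0 [] (Pair (star A) (star B)) u'"
        then show ?thesis using star_normal[OF iso] by simp
      qed
    qed
  qed simp
  ultimately show ?thesis using tp by (simp add: RC_prod_def)
qed

lemma prod_var: assumes A: "is_type A" and B: "is_type B" and R1: "RC A R1" and R2: "RC B R2"
  shows "variant_closed (RC_prod A B R1 R2)" unfolding variant_closed_def
proof (intro ballI allI impI)
  fix t z assume t: "t \<in> RC_prod A B R1 R2" and z: "(z, Top) \<notin> fvs t"
  then have "repl_star z (Pi1 t) \<in> R1" "repl_star z (Pi2 t) \<in> R2"
    using RC_var[OF R1, of "Pi1 t" z] RC_var[OF R2, of "Pi2 t" z] t z by (simp_all add: RC_prod_def)
  then show "repl_star z t \<in> RC_prod A B R1 R2" using t typing_repl[of 0 "[]" t "Prod A B" z] by (simp add: RC_prod_def has_type_def)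
qed

lemma prod_SN: assumes A: "is_type A" and B: "is_type B" and R1: "RC A R1" and R2: "RC B R2"
  and t: "t \<in> RC_prod A B R1 R2" shows "SN t"
  using t RC_SN[OF R1] SN_Pi1 by (auto simp: RC_prod_def)

lemma prod_step: assumes A: "is_type A" and B: "is_type B" and R1: "RC A R1" and R2: "RC B R2"
  and t: "t \<in> RC_prod A B R1 R2" and st: "step t t'" shows "t' \<in> RC_prod A B R1 R2"
proof -
  have "step (Pi1 t) (Pi1 t')" "step (Pi2 t) (Pi2 t')" using st by (auto simp: step_def intro: red.c_Pi1 red.c_Pi2)
  then show "t' \<in> RC_prod A B R1 R2" using t st has_type_step RC_step[OF R1] RC_step[OF R2]
    by (auto simp: RC_prod_def)
qed

lemma prod_neutral: assumes A: "is_type A" and B: "is_type B" and R1: "RC A R1" and R2: "RC B R2"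
  and ty: "has_type t (Prod A B)" and ne: "neutral t" and all: "\<forall>t'. step t t' \<longrightarrow> t' \<in> RC_prod A B R1 R2"
  shows "t \<in> RC_prod A B R1 R2"
proof -
  have "Pi1 t \<in> R1"
  proof (rule RC_neutral[OF R1])
    show ty1: "has_type (Pi1 t) A" using ty typing.T_Pi1[of 0 "[]" t A B] by (simp add: has_type_def)
    show "t' \<in> R1" if "step (Pi1 t) t'" for t'
    proof -
      from Pi1_red[OF that[unfolded step_def]] show ?thesis
      proof (elim disjE exE conjE)
        fix b assume "t = Pair t' b" then show ?thesis using ne by (simp add: neutral_def)
      next
        fix T' assume "t' = star T'" "iso T'" "typing 0 [] (Pi1 t) T'"
        moreover have "T' = A" using typing_unique[OF \<open>typing 0 [] (Pi1 t) T'\<close>] ty1 by (simp add: has_type_def)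
        ultimately show ?thesis using RC_star[OF R1] by simp
      next
        fix u' assume "t' = Pi1 u'" "red 0 [] t u'"
        then show ?thesis using all by (auto simp: step_def RC_prod_def)
      qed
    qed
  qed simp
  moreover have "Pi2 t \<in> R2"
  proof (rule RC_neutral[OF R2])
    show ty1: "has_type (Pi2 t) B" using ty typing.T_Pi2[of 0 "[]" t A B] by (simp add: has_type_def)
    show "t' \<in> R2" if "step (Pi2 t) t'" for t'
    proof -
      from Pi2_red[OF that[unfolded step_def]] show ?thesis
      proof (elim disjE exE conjE)
        fix a assume "t = Pair a t'" then show ?thesis using ne by (simp add: neutral_def)
      next
        fix T' assume "t' = star T'" "iso T'" "typing 0 [] (Pi2 t) T'"
        moreover have "T' = B" using typing_unique[OF \<open>typing 0 [] (Pi2 t) T'\<close>] ty1 by (simp add: has_type_def)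
        ultimately show ?thesis using RC_star[OF R2] by simp
      next
        fix u' assume "t' = Pi2 u'" "red 0 [] t u'"
        then show ?thesis using all by (auto simp: step_def RC_prod_def)
      qed
    qed
  qed simp
  ultimately show "t \<in> RC_prod A B R1 R2" using ty by (simp add: RC_prod_def)
qed


lemma part_prod: assumes A: "is_type A" and B: "is_type B" and R1: "RC A R1" and R2: "RC B R2"
  shows "RC (Prod A B) (RC_prod A B R1 R2)"
  unfolding RC_def
proof (intro conjI allI impI ballI)
  show "has_type t (Prod A B)" if "t \<in> RC_prod A B R1 R2" for t using that by (simp add: RC_prod_def)
  show "star (Prod A B) \<in> RC_prod A B R1 R2" if "iso (Prod A B)" using prod_star[OF A B R1 R2 that] .
  show "variant_closed (RC_prod A B R1 R2)" using prod_var[OF A B R1 R2] .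
  show "SN t" if "t \<in> RC_prod A B R1 R2" for t using prod_SN[OF A B R1 R2 that] .
  show "t' \<in> RC_prod A B R1 R2" if "t \<in> RC_prod A B R1 R2" "step t t'" for t t' using prod_step[OF A B R1 R2 that] .
  show "t \<in> RC_prod A B R1 R2" if "has_type t (Prod A B)" "neutral t" "\<forall>t'. step t t' \<longrightarrow> t' \<in> RC_prod A B R1 R2" for t
    using prod_neutral[OF A B R1 R2 that] .
qed




lemma arr_star: assumes A: "is_type A" and B: "is_type B" and R1: "RC A R1" and R2: "RC B R2"
  and iso: "iso (Arr A B)"
  shows "star (Arr A B) \<in> RC_arr A B R1 R2"
proof -
  have iB: "iso B" using iso_Arr_inv[OF iso] .
  have "is_type (Arr A B)" using A B by (simp add: is_type_def)
  from star_has_type[OF this iso] have tp: "has_type (star (Arr A B)) (Arr A B)" .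
  then have tp': "typing 0 [] (Lam A (star B)) (Arr A B)" by (simp add: has_type_def)
  have "App (Lam A (star B)) u \<in> R2" if u: "u \<in> R1" for u
  proof -
    have "SN u" using RC_SN[OF R1 u] .
    then show ?thesis using u
    proof (induction rule: SN_induct)
      case (step u)
      show ?case
      proof (rule RC_neutral[OF R2])
        have "typing 0 [] u A" using RC_typed[OF R1 step.prems] by (simp add: has_type_def)
        from typing.T_App[OF tp' this] show ty: "has_type (App (Lam A (star B)) u) B" by (simp add: has_type_def)
        show "t' \<in> R2" if "step (App (Lam A (star B)) u) t'" for t'
        proof -
          from App_red[OF that[unfolded step_def]] show ?thesis
          proof (elim disjE exE conjE)
            fix A' b assume h: "Lam A (star B) = Lam A' b" "t' = subst 0 u b"
            from h(1) have "b = star B" by simp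
            with h(2) have "t' = star B" by simp
            then show ?thesis using RC_star[OF R2 iB] by simp
          next
            fix T' assume "t' = star T'" "typing 0 [] (App (Lam A (star B)) u) T'"
            moreover have "T' = B" using typing_unique[OF \<open>typing 0 [] (App (Lam A (star B)) u) T'\<close>] ty by (simp add: has_type_def)
            ultimately show ?thesis using RC_star[OF R2 iB] by simp
          next
            fix u' assume "red 0 [] (Lam A (star B)) u'"
            then show ?thesis using star_normal[OF iso] by simp
          next
            fix v' assume "t' = App (Lam A (star B)) v'" "red 0 [] u v'"
            moreover have "v' \<in> R1" using RC_step[OF R1 step.prems] \<open>red 0 [] u v'\<close> by (simp add: step_def)
            ultimately show ?thesis using step.IH[of v'] by (simp add: step_def)
          qed
        qed
      qed simp
    qed
  qed
  then show ?thesis using tp by (simp add: RC_arr_def)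
qed

lemma arr_var: assumes A: "is_type A" and B: "is_type B" and R1: "RC A R1" and R2: "RC B R2"
  shows "variant_closed (RC_arr A B R1 R2)" unfolding variant_closed_def
proof (intro ballI allI impI)
  fix t z assume t: "t \<in> RC_arr A B R1 R2" and z: "(z, Top) \<notin> fvs t"
  have "App (repl_star z t) u \<in> R2" if u: "u \<in> R1" for u
  proof -
    define u0 where "u0 = unz z u"
    have "step\<^sup>*\<^sup>* u u0" unfolding u0_def step_eq by (rule rt_unz)
    then have u0: "u0 \<in> R1" using RC_rt[OF R1 u] by blast
    then have "App t u0 \<in> R2" using t by (simp add: RC_arr_def)
    moreover have "(z, Top) \<notin> fvs (App t u0)" using z fvs_unz[of z u] by (simp add: u0_def)
    ultimately have "repl_star z (App t u0) \<in> R2" using RC_var[OF R2] by blast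
    then have a: "App (repl_star z t) (repl_star z u0) \<in> R2" by simp
    have "step\<^sup>*\<^sup>* (App (repl_star z t) (repl_star z u0)) (App (repl_star z t) u)"
      unfolding u0_def step_eq by (rule rt_AppR) (rule rt_repl_unz)
    then show ?thesis using RC_rt[OF R2 a] by blast
  qed
  moreover have "has_type (repl_star z t) (Arr A B)"
    using t typing_repl[of 0 "[]" t "Arr A B" z] by (simp add: RC_arr_def has_type_def)
  ultimately show "repl_star z t \<in> RC_arr A B R1 R2" by (simp add: RC_arr_def)
qed

lemma arr_SN: assumes A: "is_type A" and B: "is_type B" and R1: "RC A R1" and R2: "RC B R2"
  and t: "t \<in> RC_arr A B R1 R2" shows "SN t"
proof -
  have "App t (FVar 0 A) \<in> R2" using t var_in_RC[OF A R1] by (simp add: RC_arr_def)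
  then show ?thesis using RC_SN[OF R2] SN_App by blast
qed

lemma arr_step: assumes A: "is_type A" and B: "is_type B" and R1: "RC A R1" and R2: "RC B R2"
  and t: "t \<in> RC_arr A B R1 R2" and st: "step t t'" shows "t' \<in> RC_arr A B R1 R2"
proof -
  have "has_type t (Arr A B)" using t by (simp add: RC_arr_def)
  then have "has_type t' (Arr A B)" using st has_type_step by blast
  moreover have "App t' u \<in> R2" if "u \<in> R1" for u
  proof -
    have "App t u \<in> R2" using t that by (simp add: RC_arr_def)
    moreover have "step (App t u) (App t' u)" using st by (simp add: step_def red.c_AppL)
    ultimately show ?thesis using RC_step[OF R2] by blast
  qed
  ultimately show ?thesis by (simp add: RC_arr_def)
qed

lemma arr_neutral: assumes A: "is_type A" and B: "is_type B" and R1: "RC A R1" and R2: "RC B R2"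
  and ty: "has_type t (Arr A B)" and ne: "neutral t" and all: "\<forall>t'. step t t' \<longrightarrow> t' \<in> RC_arr A B R1 R2"
  shows "t \<in> RC_arr A B R1 R2"
proof -
  have tp': "typing 0 [] t (Arr A B)" using ty by (simp add: has_type_def)
  have "App t u \<in> R2" if u: "u \<in> R1" for u
  proof -
    have "SN u" using RC_SN[OF R1 u] .
    then show ?thesis using u
    proof (induction rule: SN_induct)
      case (step u)
      show ?case
      proof (rule RC_neutral[OF R2])
        have "typing 0 [] u A" using RC_typed[OF R1 step.prems] by (simp add: has_type_def)
        from typing.T_App[OF tp' this] show ty: "has_type (App t u) B" by (simp add: has_type_def)
        show "t' \<in> R2" if "step (App t u) t'" for t'
        proof -
          from App_red[OF that[unfolded step_def]] show ?thesis
          proof (elim disjE exE conjE)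
            fix A' b assume "t = Lam A' b"
            then show ?thesis using ne by (simp add: neutral_def)
          next
            fix T' assume "t' = star T'" "iso T'" "typing 0 [] (App t u) T'"
            moreover have "T' = B" using typing_unique[OF \<open>typing 0 [] (App t u) T'\<close>] ty by (simp add: has_type_def)
            ultimately show ?thesis using RC_star[OF R2] by simp
          next
            fix u' assume "t' = App u' u" "red 0 [] t u'"
            then have "u' \<in> RC_arr A B R1 R2" using all by (simp add: step_def)
            then show ?thesis using \<open>t' = App u' u\<close> step.prems by (simp add: RC_arr_def)
          next
            fix v' assume "t' = App t v'" "red 0 [] u v'"
            moreover have "v' \<in> R1" using RC_step[OF R1 step.prems] \<open>red 0 [] u v'\<close> by (simp add: step_def)
            ultimately show ?thesis using step.IH[of v'] by (simp add: step_def)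
          qed
        qed
      qed simp
    qed
  qed
  then show ?thesis using ty by (simp add: RC_arr_def)
qed

lemma part_arr: assumes A: "is_type A" and B: "is_type B" and R1: "RC A R1" and R2: "RC B R2"
  shows "RC (Arr A B) (RC_arr A B R1 R2)"
  unfolding RC_def
proof (intro conjI allI impI ballI)
  show "has_type t (Arr A B)" if "t \<in> RC_arr A B R1 R2" for t using that by (simp add: RC_arr_def)
  show "star (Arr A B) \<in> RC_arr A B R1 R2" if "iso (Arr A B)" using arr_star[OF A B R1 R2 that] .
  show "variant_closed (RC_arr A B R1 R2)" using arr_var[OF A B R1 R2] .
  show "SN t" if "t \<in> RC_arr A B R1 R2" for t using arr_SN[OF A B R1 R2 that] .
  show "t' \<in> RC_arr A B R1 R2" if "t \<in> RC_arr A B R1 R2" "step t t'" for t t' using arr_step[OF A B R1 R2 that] .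
  show "t \<in> RC_arr A B R1 R2" if "has_type t (Arr A B)" "neutral t" "\<forall>t'. step t t' \<longrightarrow> t' \<in> RC_arr A B R1 R2" for t
    using arr_neutral[OF A B R1 R2 that] .
qed

theorem mainTheorem14:
  shows "(\<forall>T. is_type T \<longrightarrow> RC T (SNset T)) \<and>
         (\<forall>A B R1 R2. is_type A \<longrightarrow> is_type B \<longrightarrow> RC A R1 \<longrightarrow> RC B R2 \<longrightarrow>
            RC (Prod A B) (RC_prod A B R1 R2) \<and> RC (Arr A B) (RC_arr A B R1 R2))"
  using part1 part_prod part_arr by blast


end
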